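(* Let $\Gamma$ be a finite simplicial graph with no SIL, and let $k\ge0$ be the number of non-abelian free equivalence classes of $\Gamma$. Then $\mathbb{A}_\Gamma\cong(\mathbb{F}_2)^k\times\mathbb{A}_\Lambda$ for some graph $\Lambda$ with no non-abelian free equivalence class.
   Context: $\mathbb{A}_\Gamma$ is the right-angled Artin group on $\Gamma$. $\mathrm{lk}(u)$ = neighbours of $u$, $\mathrm{st}(u)=\mathrm{lk}(u)\cup\{u\}$; $u\le v$ iff $\mathrm{lk}(u)\subseteq\mathrm{st}(v)$; $u\sim v$ iff $u\le v\le u$; a non-abelian free equivalence class is a class of size $\ge 2$ whose vertices are pairwise non-adjacent. A SIL is a triple $(x,y\mid z)$ of pairwise non-adjacent vertices such that the component of $\Gamma\setminus(\mathrm{lk}(x)\cap\mathrm{lk}(y))$ containing $z$ contains neither $x$ nor $y$. *)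

theory Defs
  imports "HOL-Algebra.Algebra"
begin

definition simple_graph :: "'v set \<Rightarrow> ('v \<Rightarrow> 'v \<Rightarrow> bool) \<Rightarrow> bool" where
  "simple_graph V E \<longleftrightarrow> finite V \<and> (\<forall>u v. E u v \<longrightarrow> E v u) \<and> (\<forall>u. \<not> E u u)
     \<and> (\<forall>u v. E u v \<longrightarrow> u \<in> V \<and> v \<in> V)"

definition lk :: "'v set \<Rightarrow> ('v \<Rightarrow> 'v \<Rightarrow> bool) \<Rightarrow> 'v \<Rightarrow> 'v set" where
  "lk V E u = {w \<in> V. E u w}"

definition st :: "'v set \<Rightarrow> ('v \<Rightarrow> 'v \<Rightarrow> bool) \<Rightarrow> 'v \<Rightarrow> 'v set" where
  "st V E u = insert u (lk V E u)"

definition vle :: "'v set \<Rightarrow> ('v \<Rightarrow> 'v \<Rightarrow> bool) \<Rightarrow> 'v \<Rightarrow> 'v \<Rightarrow> bool" where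
  "vle V E u v \<longleftrightarrow> lk V E u \<subseteq> st V E v"

definition vequiv :: "'v set \<Rightarrow> ('v \<Rightarrow> 'v \<Rightarrow> bool) \<Rightarrow> 'v \<Rightarrow> 'v \<Rightarrow> bool" where
  "vequiv V E u v \<longleftrightarrow> vle V E u v \<and> vle V E v u"

definition equiv_class :: "'v set \<Rightarrow> ('v \<Rightarrow> 'v \<Rightarrow> bool) \<Rightarrow> 'v \<Rightarrow> 'v set" where
  "equiv_class V E u = {v \<in> V. vequiv V E u v}"

definition nafree_classes :: "'v set \<Rightarrow> ('v \<Rightarrow> 'v \<Rightarrow> bool) \<Rightarrow> 'v set set" where
  "nafree_classes V E = {C. \<exists>u\<in>V. C = equiv_class V E u \<and> 2 \<le> card C
      \<and> (\<forall>a\<in>C. \<forall>b\<in>C. \<not> E a b)}"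

definition component :: "('v \<Rightarrow> 'v \<Rightarrow> bool) \<Rightarrow> 'v set \<Rightarrow> 'v \<Rightarrow> 'v set" where
  "component E S z = {w. (\<lambda>a b. E a b \<and> a \<in> S \<and> b \<in> S)\<^sup>*\<^sup>* z w}"

definition is_SIL :: "'v set \<Rightarrow> ('v \<Rightarrow> 'v \<Rightarrow> bool) \<Rightarrow> 'v \<Rightarrow> 'v \<Rightarrow> 'v \<Rightarrow> bool" where
  "is_SIL V E x y z \<longleftrightarrow> x \<in> V \<and> y \<in> V \<and> z \<in> V \<and> x \<noteq> y \<and> x \<noteq> z \<and> y \<noteq> z
     \<and> \<not> E x y \<and> \<not> E x z \<and> \<not> E y z
     \<and> (let S = V - (lk V E x \<inter> lk V E y)
        in x \<notin> component E S z \<and> y \<notin> component E S z)"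

definition no_SIL :: "'v set \<Rightarrow> ('v \<Rightarrow> 'v \<Rightarrow> bool) \<Rightarrow> bool" where
  "no_SIL V E \<longleftrightarrow> (\<forall>x y z. \<not> is_SIL V E x y z)"

text \<open>Words are lists of letters (v, b): v^(+1) if b, v^(-1) otherwise.\<close>

inductive raag_step :: "'v set \<Rightarrow> ('v \<Rightarrow> 'v \<Rightarrow> bool) \<Rightarrow> ('v \<times> bool) list \<Rightarrow> ('v \<times> bool) list \<Rightarrow> bool"
  for V E where
  cancel: "a \<in> V \<Longrightarrow> raag_step V E (xs @ [(a, b), (a, \<not> b)] @ ys) (xs @ ys)"
| commute: "E a c \<Longrightarrow> raag_step V E (xs @ [(a, b), (c, d)] @ ys) (xs @ [(c, d), (a, b)] @ ys)"

definition raag_eq :: "'v set \<Rightarrow> ('v \<Rightarrow> 'v \<Rightarrow> bool) \<Rightarrow> ('v \<times> bool) list \<Rightarrow> ('v \<times> bool) list \<Rightarrow> bool" where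
  "raag_eq V E = (\<lambda>x y. raag_step V E x y \<or> raag_step V E y x)\<^sup>*\<^sup>*"

definition raag_class :: "'v set \<Rightarrow> ('v \<Rightarrow> 'v \<Rightarrow> bool) \<Rightarrow> ('v \<times> bool) list \<Rightarrow> ('v \<times> bool) list set" where
  "raag_class V E w = {w'. set (map fst w') \<subseteq> V \<and> raag_eq V E w w'}"

definition raag :: "'v set \<Rightarrow> ('v \<Rightarrow> 'v \<Rightarrow> bool) \<Rightarrow> ('v \<times> bool) list set monoid" where
  "raag V E = \<lparr> carrier = raag_class V E ` {w. set (map fst w) \<subseteq> V},
     monoid.mult = (\<lambda>A B. raag_class V E ((SOME a. a \<in> A) @ (SOME b. b \<in> B))),
     one = raag_class V E [] \<rparr>"

definition F2 :: "(bool \<times> bool) list set monoid" where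
  "F2 = raag UNIV (\<lambda>_ _. False)"

end

theory Submission
  imports Defs
begin

definition wmap :: "('v \<Rightarrow> 'w) \<Rightarrow> ('v \<Rightarrow> bool) \<Rightarrow> ('v \<times> bool) list \<Rightarrow> ('w \<times> bool) list" where
  "wmap f P w = map (\<lambda>(x,s). (f x, s)) (filter (\<lambda>(x,s). P x) w)"

lemma wmap_append[simp]: "wmap f P (xs @ ys) = wmap f P xs @ wmap f P ys"
  by (simp add: wmap_def)
lemma wmap_Nil[simp]: "wmap f P [] = []" by (simp add: wmap_def)
lemma wmap_Cons[simp]: "wmap f P ((x,s) # w) = (if P x then (f x, s) # wmap f P w else wmap f P w)"
  by (simp add: wmap_def)

lemma raag_eq_refl[simp]: "raag_eq V E w w" by (simp add: raag_eq_def)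

lemma raag_eq_trans: "raag_eq V E x y \<Longrightarrow> raag_eq V E y z \<Longrightarrow> raag_eq V E x z"
  unfolding raag_eq_def by (rule rtranclp_trans)

lemma raag_eq_sym: "raag_eq V E x y \<Longrightarrow> raag_eq V E y x"
  unfolding raag_eq_def
proof (induction rule: rtranclp_induct)
  case base then show ?case by simp
next
  case (step y z)
  then have "(\<lambda>x y. raag_step V E x y \<or> raag_step V E y x) z y" by blast
  then show ?case using step.IH by (rule converse_rtranclp_into_rtranclp)
qed

lemma raag_eq_step: "raag_step V E x y \<Longrightarrow> raag_eq V E x y"
  unfolding raag_eq_def by (simp add: r_into_rtranclp)

lemma raag_step_ctx: "raag_step V E x y \<Longrightarrow> raag_step V E (xs @ x @ ys) (xs @ y @ ys)"
proof (induction rule: raag_step.induct)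
  case (cancel a xs' b ys')
  then show ?case using raag_step.cancel[where xs="xs@xs'" and ys="ys'@ys" and a=a and b=b and V=V and E=E] by simp
next
  case (commute a c xs' b d ys')
  then show ?case using raag_step.commute[where xs="xs@xs'" and ys="ys'@ys" and a=a and c=c and b=b and d=d and V=V and E=E] by simp
qed

lemma raag_eq_ctx: "raag_eq V E x y \<Longrightarrow> raag_eq V E (xs @ x @ ys) (xs @ y @ ys)"
  unfolding raag_eq_def
proof (induction rule: rtranclp_induct)
  case base then show ?case by simp
next
  case (step y z)
  then have "(\<lambda>x y. raag_step V E x y \<or> raag_step V E y x) (xs @ y @ ys) (xs @ z @ ys)"
    using raag_step_ctx by blast
  with step.IH show ?case by (rule rtranclp.rtrancl_into_rtrancl)
qed

lemma raag_eq_app: "raag_eq V E x x' \<Longrightarrow> raag_eq V E y y' \<Longrightarrow> raag_eq V E (x @ y) (x' @ y')"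
  using raag_eq_ctx[of V E x x' "[]" y] raag_eq_ctx[of V E y y' x' "[]"]
  by (auto intro: raag_eq_trans)

lemma raag_step_wmap:
  assumes "raag_step V E w w'" "\<And>a. a \<in> V \<Longrightarrow> P a \<Longrightarrow> f a \<in> V'"
    "\<And>a c. E a c \<Longrightarrow> P a \<Longrightarrow> P c \<Longrightarrow> E' (f a) (f c)"
  shows "raag_eq V' E' (wmap f P w) (wmap f P w')"
  using assms(1)
proof (cases rule: raag_step.cases)
  case (cancel a xs b ys)
  show ?thesis
  proof (cases "P a")
    case True
    have "raag_step V' E' (wmap f P xs @ [(f a, b), (f a, \<not> b)] @ wmap f P ys) (wmap f P xs @ wmap f P ys)"
      using assms(2) cancel True by (intro raag_step.cancel) auto
    then show ?thesis using cancel True by (simp add: raag_eq_step)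
  next
    case False then show ?thesis using cancel by simp
  qed
next
  case (commute a c xs b d ys)
  show ?thesis
  proof (cases "P a \<and> P c")
    case True
    have "raag_step V' E' (wmap f P xs @ [(f a, b), (f c, d)] @ wmap f P ys) (wmap f P xs @ [(f c, d), (f a, b)] @ wmap f P ys)"
      using assms(3) commute True by (intro raag_step.commute) auto
    then show ?thesis using commute True by (simp add: raag_eq_step)
  next
    case False then show ?thesis using commute by auto
  qed
qed

lemma raag_eq_wmap:
  assumes "raag_eq V E w w'" "\<And>a. a \<in> V \<Longrightarrow> P a \<Longrightarrow> f a \<in> V'"
    "\<And>a c. E a c \<Longrightarrow> P a \<Longrightarrow> P c \<Longrightarrow> E' (f a) (f c)"
  shows "raag_eq V' E' (wmap f P w) (wmap f P w')"
  using assms(1) unfolding raag_eq_def[of V E]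
proof (induction rule: rtranclp_induct)
  case base then show ?case by simp
next
  case (step y z)
  have "raag_step V E y z \<or> raag_step V E z y" using step(2) by simp
  then have "raag_eq V' E' (wmap f P y) (wmap f P z)"
  proof
    assume "raag_step V E y z"
    then show ?thesis using raag_step_wmap[of V E y z P f V' E'] assms(2,3) by blast
  next
    assume "raag_step V E z y"
    then show ?thesis using raag_step_wmap[of V E z y P f V' E'] assms(2,3) raag_eq_sym by blast
  qed
  then show ?case using step.IH raag_eq_trans by blast
qed

lemma raag_class_eq: "raag_eq V E x y \<Longrightarrow> raag_class V E x = raag_class V E y"
  unfolding raag_class_def by (auto intro: raag_eq_trans raag_eq_sym)

lemma raag_class_mem: "set (map fst x) \<subseteq> V \<Longrightarrow> x \<in> raag_class V E x"
  unfolding raag_class_def by simp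

lemma raag_class_eqD:
  assumes "raag_class V E x = raag_class V E y" "set (map fst y) \<subseteq> V"
  shows "raag_eq V E x y"
proof -
  have "y \<in> raag_class V E y" using assms(2) by (rule raag_class_mem)
  then have "y \<in> raag_class V E x" using assms(1) by simp
  then show ?thesis unfolding raag_class_def by simp
qed

lemma raag_mult:
  assumes "set (map fst x) \<subseteq> V" "set (map fst y) \<subseteq> V"
  shows "raag_class V E x \<otimes>\<^bsub>raag V E\<^esub> raag_class V E y = raag_class V E (x @ y)"
proof -
  let ?a = "SOME a. a \<in> raag_class V E x"
  let ?b = "SOME b. b \<in> raag_class V E y"
  have "?a \<in> raag_class V E x" by (rule someI, rule raag_class_mem[OF assms(1)])
  then have a: "raag_eq V E x ?a" unfolding raag_class_def by simp
  have "?b \<in> raag_class V E y" by (rule someI, rule raag_class_mem[OF assms(2)])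
  then have b: "raag_eq V E y ?b" unfolding raag_class_def by simp
  have "raag_eq V E (?a @ ?b) (x @ y)" using raag_eq_app[OF a b] raag_eq_sym by blast
  then show ?thesis unfolding raag_def by (simp add: raag_class_eq)
qed

lemma raag_iso_from_words:
  fixes F :: "('v \<times> bool) list \<Rightarrow> 'h"
  assumes resp: "\<And>x y. set (map fst x) \<subseteq> V \<Longrightarrow> set (map fst y) \<subseteq> V \<Longrightarrow> raag_eq V E x y \<Longrightarrow> F x = F y"
    and carr: "\<And>x. set (map fst x) \<subseteq> V \<Longrightarrow> F x \<in> carrier H"
    and mult: "\<And>x y. set (map fst x) \<subseteq> V \<Longrightarrow> set (map fst y) \<subseteq> V \<Longrightarrow> F (x @ y) = F x \<otimes>\<^bsub>H\<^esub> F y"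
    and surj: "\<And>h. h \<in> carrier H \<Longrightarrow> \<exists>x. set (map fst x) \<subseteq> V \<and> F x = h"
    and inj: "\<And>x y. set (map fst x) \<subseteq> V \<Longrightarrow> set (map fst y) \<subseteq> V \<Longrightarrow> F x = F y \<Longrightarrow> raag_eq V E x y"
  shows "raag V E \<cong> H"
proof -
  define hh where "hh A = F (SOME w. w \<in> A)" for A
  have key: "hh (raag_class V E x) = F x" if x: "set (map fst x) \<subseteq> V" for x
  proof -
    let ?w = "SOME w. w \<in> raag_class V E x"
    have "?w \<in> raag_class V E x" by (rule someI, rule raag_class_mem[OF x])
    then have w: "set (map fst ?w) \<subseteq> V" "raag_eq V E x ?w" unfolding raag_class_def by auto
    have F: "F x = F ?w" by (rule resp[OF x w(1) w(2)])
    show ?thesis unfolding hh_def using F by simp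
  qed
  have C: "carrier (raag V E) = raag_class V E ` {w. set (map fst w) \<subseteq> V}"
    by (simp add: raag_def)
  have H1: "hh \<in> carrier (raag V E) \<rightarrow> carrier H"
  proof
    fix A assume "A \<in> carrier (raag V E)"
    then obtain x where "set (map fst x) \<subseteq> V" "A = raag_class V E x" unfolding C by auto
    then show "hh A \<in> carrier H" using key carr by simp
  qed
  have H2: "hh (A \<otimes>\<^bsub>raag V E\<^esub> B) = hh A \<otimes>\<^bsub>H\<^esub> hh B"
    if "A \<in> carrier (raag V E)" "B \<in> carrier (raag V E)" for A B
  proof -
    from that obtain x y where xy: "set (map fst x) \<subseteq> V" "set (map fst y) \<subseteq> V"
      "A = raag_class V E x" "B = raag_class V E y" unfolding C by auto
    have "set (map fst (x @ y)) \<subseteq> V" using xy by auto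
    then show "hh (A \<otimes>\<^bsub>raag V E\<^esub> B) = hh A \<otimes>\<^bsub>H\<^esub> hh B"
      using xy by (simp add: raag_mult key mult)
  qed
  have "hh \<in> hom (raag V E) H" using H1 H2 unfolding hom_def by blast
  moreover have "bij_betw hh (carrier (raag V E)) (carrier H)"
    unfolding bij_betw_def
  proof
    show "inj_on hh (carrier (raag V E))"
    proof (rule inj_onI)
      fix A B assume AB: "A \<in> carrier (raag V E)" "B \<in> carrier (raag V E)" "hh A = hh B"
      then obtain x y where xy: "set (map fst x) \<subseteq> V" "set (map fst y) \<subseteq> V"
        "A = raag_class V E x" "B = raag_class V E y" unfolding C by auto
      then have "F x = F y" using AB(3) key by simp
      then have "raag_eq V E x y" using inj xy(1,2) by blast
      then show "A = B" using xy(3,4) raag_class_eq by blast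
    qed
    show "hh ` carrier (raag V E) = carrier H"
    proof
      show "hh ` carrier (raag V E) \<subseteq> carrier H" using H1 by blast
      show "carrier H \<subseteq> hh ` carrier (raag V E)"
      proof
        fix h assume "h \<in> carrier H"
        then obtain x where x: "set (map fst x) \<subseteq> V" "F x = h" using surj by blast
        have m: "raag_class V E x \<in> carrier (raag V E)" unfolding C using x(1) by blast
        have "hh (raag_class V E x) = h" using key[OF x(1)] x(2) by simp
        then show "h \<in> hh ` carrier (raag V E)" using m by (metis image_eqI)
      qed
    qed
  qed
  ultimately show ?thesis unfolding is_iso_def iso_def by blast
qed

lemma wmap_fst: "set (map fst (wmap f P w)) = f ` {a \<in> set (map fst w). P a}"
  by (induction w) (auto simp: wmap_def)

lemma wmap_mem[simp]: "(a,s) \<in> set (wmap f P w) \<longleftrightarrow> (\<exists>a'. a = f a' \<and> P a' \<and> (a',s) \<in> set w)"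
  by (auto simp: wmap_def)

lemma wmap_wmap: "wmap f P (wmap g Q w) = wmap (f \<circ> g) (\<lambda>a. Q a \<and> P (g a)) w"
  by (induction w) (auto simp: wmap_def)

lemma wmap_cong: "(\<And>a. a \<in> set (map fst w) \<Longrightarrow> P a = P' a \<and> (P a \<longrightarrow> f a = f' a)) \<Longrightarrow> wmap f P w = wmap f' P' w"
  by (induction w) (auto simp: wmap_def)

lemma wmap_id: "wmap id (\<lambda>_. True) w = w"
  by (induction w) (auto simp: wmap_def)

lemma wmap_empty: "(\<And>a. a \<in> set (map fst w) \<Longrightarrow> \<not> P a) \<Longrightarrow> wmap f P w = []"
  by (induction w) (auto simp: wmap_def)

definition restr :: "('v \<Rightarrow> 'v \<Rightarrow> bool) \<Rightarrow> 'v set \<Rightarrow> 'v \<Rightarrow> 'v \<Rightarrow> bool" where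
  "restr E L = (\<lambda>c d. E c d \<and> c \<in> L \<and> d \<in> L)"

lemma raag_eq_commute_past:
  assumes "\<And>c. c \<in> set (map fst A) \<Longrightarrow> E a c"
  shows "raag_eq V E ((a,s) # A @ B) (A @ (a,s) # B)"
  using assms
proof (induction A)
  case Nil then show ?case by simp
next
  case (Cons p A)
  obtain c t where p: "p = (c,t)" by (cases p)
  have "E a c" using Cons.prems p by simp
  then have "raag_step V E ([] @ [(a,s),(c,t)] @ (A @ B)) ([] @ [(c,t),(a,s)] @ (A @ B))"
    by (rule raag_step.commute)
  then have 1: "raag_eq V E ((a,s) # p # A @ B) (p # (a,s) # A @ B)" using p by (simp add: raag_eq_step)
  have "raag_eq V E ((a,s) # A @ B) (A @ (a,s) # B)" using Cons by simp
  then have "raag_eq V E ([p] @ ((a,s) # A @ B) @ []) ([p] @ (A @ (a,s) # B) @ [])" by (rule raag_eq_ctx)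
  then show ?case using 1 by (simp add: raag_eq_trans)
qed

lemma join_sort:
  assumes "\<And>a. a \<in> set (map fst w) \<Longrightarrow> P a \<or> Q a"
    and "\<And>a c. Q a \<Longrightarrow> P c \<Longrightarrow> E a c"
    and "\<And>a. P a \<Longrightarrow> \<not> Q a"
  shows "raag_eq V E w (wmap id P w @ wmap id Q w)"
  using assms(1)
proof (induction w)
  case Nil then show ?case by simp
next
  case (Cons p w)
  obtain a s where p: "p = (a,s)" by (cases p)
  have "\<And>a. a \<in> set (map fst w) \<Longrightarrow> P a \<or> Q a" using Cons.prems by auto
  note IH = Cons.IH[OF this]
  have "P a \<or> Q a" using Cons.prems p by simp
  then show ?case
  proof
    assume Pa: "P a"
    have "raag_eq V E ([p] @ w @ []) ([p] @ (wmap id P w @ wmap id Q w) @ [])"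
      using IH by (rule raag_eq_ctx)
    then have c: "raag_eq V E (p # w) (p # (wmap id P w @ wmap id Q w))" by simp
    have e1: "wmap id P (p # w) = p # wmap id P w" using Pa by (simp add: wmap_def p)
    have e2: "wmap id Q (p # w) = wmap id Q w" using assms(3)[OF Pa] by (simp add: wmap_def p)
    show ?thesis unfolding e1 e2 using c by simp
  next
    assume Qa: "Q a"
    have nP: "\<not> P a" using Qa assms(3) by blast
    have "raag_eq V E ([p] @ w @ []) ([p] @ (wmap id P w @ wmap id Q w) @ [])"
      using IH by (rule raag_eq_ctx)
    then have 1: "raag_eq V E (p # w) ((a,s) # wmap id P w @ wmap id Q w)" using p by simp
    have "raag_eq V E ((a,s) # wmap id P w @ wmap id Q w) (wmap id P w @ (a,s) # wmap id Q w)"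
      by (rule raag_eq_commute_past) (auto simp: wmap_fst intro: assms(2)[OF Qa])
    then have c: "raag_eq V E (p # w) (wmap id P w @ p # wmap id Q w)" using 1 p raag_eq_trans by metis
    have e1: "wmap id P (p # w) = wmap id P w" using nP by (simp add: wmap_def p)
    have e2: "wmap id Q (p # w) = p # wmap id Q w" using Qa by (simp add: wmap_def p)
    show ?thesis unfolding e1 e2 by (rule c)
  qed
qed

lemma join_iso:
  fixes V :: "'v set"
  assumes sg: "simple_graph V E" and uV: "u \<in> V" "b \<in> V" "u \<noteq> b" "\<not> E u b"
    and L: "L = V - {u,b}" and adj: "\<And>x. x \<in> L \<Longrightarrow> E u x \<and> E b x"
  shows "raag V E \<cong> F2 \<times>\<times> raag L (restr E L)"
proof -
  have symE: "\<And>x y. E x y \<Longrightarrow> E y x" and irr: "\<And>x. \<not> E x x"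
    and inV: "\<And>x y. E x y \<Longrightarrow> x \<in> V \<and> y \<in> V"
    using sg unfolding simple_graph_def by blast+
  define Pab where "Pab = (\<lambda>x. x = u \<or> x = b)"
  define PL where "PL = (\<lambda>x. x \<in> L)"
  define cv where "cv = (\<lambda>x. x = u)"
  define g where "g = (\<lambda>t. if t then u else b)"
  define F where "F w = (raag_class UNIV (\<lambda>_ _. False) (wmap cv Pab w),
                         raag_class L (restr E L) (wmap id PL w))" for w
  have noE: "\<not> E a c" if "Pab a" "Pab c" for a c
    using that uV(4) irr symE unfolding Pab_def by blast
  show ?thesis unfolding F2_def
  proof (rule raag_iso_from_words[where F = F])
    fix x y :: "('v \<times> bool) list" assume xy: "set (map fst x) \<subseteq> V" "set (map fst y) \<subseteq> V" "raag_eq V E x y"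
    have 1: "raag_eq UNIV (\<lambda>_ _. False) (wmap cv Pab x) (wmap cv Pab y)"
      by (rule raag_eq_wmap[OF xy(3)]) (use noE in auto)
    have 2: "raag_eq L (restr E L) (wmap id PL x) (wmap id PL y)"
      by (rule raag_eq_wmap[OF xy(3)]) (auto simp: PL_def restr_def)
    show "F x = F y" unfolding F_def using raag_class_eq[OF 1] raag_class_eq[OF 2] by simp
  next
    fix x :: "('v \<times> bool) list" assume x: "set (map fst x) \<subseteq> V"
    have a: "set (map fst (wmap id PL x)) \<subseteq> L" by (auto simp: wmap_fst PL_def)
    show "F x \<in> carrier (raag UNIV (\<lambda>_ _. False) \<times>\<times> raag L (restr E L))"
      using a unfolding F_def raag_def by (auto intro!: imageI)
  next
    fix x y :: "('v \<times> bool) list" assume x: "set (map fst x) \<subseteq> V" and y: "set (map fst y) \<subseteq> V"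
    show "F (x @ y) = F x \<otimes>\<^bsub>raag UNIV (\<lambda>_ _. False) \<times>\<times> raag L (restr E L)\<^esub> F y"
    proof -
      have ax: "set (map fst (wmap id PL x)) \<subseteq> L" "set (map fst (wmap id PL y)) \<subseteq> L"
        by (auto simp: wmap_fst PL_def)
      show ?thesis unfolding F_def using raag_mult[OF ax, of "restr E L"]
          raag_mult[of "wmap cv Pab x" UNIV "wmap cv Pab y" "\<lambda>_ _. False"] by simp
    qed
  next
    fix h :: "(bool \<times> bool) list set \<times> ('v \<times> bool) list set"
    assume "h \<in> carrier (raag UNIV (\<lambda>_ _. False) \<times>\<times> raag L (restr E L))"
    then obtain p :: "(bool \<times> bool) list" and q :: "('v \<times> bool) list" where h: "h = (raag_class UNIV (\<lambda>_ _. False) p, raag_class L (restr E L) q)"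
      and q: "set (map fst q) \<subseteq> L"
      unfolding raag_def by auto
    define x where "x = wmap g (\<lambda>_. True) p @ q"
    have "set (map fst x) \<subseteq> V" unfolding x_def using q uV L by (auto simp: wmap_fst g_def)
    moreover have "wmap cv Pab (wmap g (\<lambda>_. True) p) = p"
    proof -
      have "wmap cv Pab (wmap g (\<lambda>_. True) p) = wmap (cv \<circ> g) (\<lambda>a. True \<and> Pab (g a)) p"
        by (rule wmap_wmap)
      also have "\<dots> = wmap id (\<lambda>_. True) p"
        by (rule wmap_cong) (use uV(3) in \<open>auto simp: cv_def g_def Pab_def\<close>)
      finally show ?thesis by (simp add: wmap_id)
    qed
    moreover have "wmap cv Pab q = []" by (rule wmap_empty) (use q L in \<open>auto simp: Pab_def\<close>)
    moreover have "wmap id PL (wmap g (\<lambda>_. True) p) = []"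
      by (simp add: wmap_wmap, rule wmap_empty) (auto simp: PL_def L g_def)
    moreover have "wmap id PL q = q"
    proof -
      have "wmap id PL q = wmap id (\<lambda>_. True) q" by (rule wmap_cong) (use q in \<open>auto simp: PL_def\<close>)
      then show ?thesis by (simp add: wmap_id)
    qed
    ultimately show "\<exists>x. set (map fst x) \<subseteq> V \<and> F x = h"
      unfolding h F_def x_def by (intro exI[of _ "wmap g (\<lambda>_. True) p @ q"]) simp
  next
    fix x y :: "('v \<times> bool) list" assume x: "set (map fst x) \<subseteq> V" and y: "set (map fst y) \<subseteq> V" and Fxy: "F x = F y"
    have "raag_eq UNIV (\<lambda>_ _. False) (wmap cv Pab x) (wmap cv Pab y)"
      using Fxy unfolding F_def by (intro raag_class_eqD) auto
    then have "raag_eq V E (wmap g (\<lambda>_. True) (wmap cv Pab x)) (wmap g (\<lambda>_. True) (wmap cv Pab y))"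
      by (rule raag_eq_wmap) (use uV in \<open>auto simp: g_def\<close>)
    moreover have "wmap g (\<lambda>_. True) (wmap cv Pab z) = wmap id Pab z" for z
      by (simp add: wmap_wmap, rule wmap_cong) (auto simp: g_def cv_def Pab_def)
    ultimately have A: "raag_eq V E (wmap id Pab x) (wmap id Pab y)" by simp
    have "raag_eq L (restr E L) (wmap id PL x) (wmap id PL y)"
      using Fxy unfolding F_def by (intro raag_class_eqD) (auto simp: wmap_fst PL_def)
    then have "raag_eq V E (wmap id (\<lambda>_. True) (wmap id PL x)) (wmap id (\<lambda>_. True) (wmap id PL y))"
      by (rule raag_eq_wmap) (auto simp: L restr_def)
    then have B: "raag_eq V E (wmap id PL x) (wmap id PL y)" by (simp add: wmap_id)
    have srt: "raag_eq V E z (wmap id Pab z @ wmap id PL z)" if "set (map fst z) \<subseteq> V" for z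
      by (rule join_sort) (use that adj symE in \<open>auto simp: Pab_def PL_def L\<close>)
    have "raag_eq V E (wmap id Pab x @ wmap id PL x) (wmap id Pab y @ wmap id PL y)"
      by (rule raag_eq_app[OF A B])
    then show "raag_eq V E x y" using srt[OF x] srt[OF y] raag_eq_sym raag_eq_trans by metis
  qed
qed

definition relab :: "('v \<Rightarrow> 'w) \<Rightarrow> 'v set \<Rightarrow> ('v \<Rightarrow> 'v \<Rightarrow> bool) \<Rightarrow> 'w \<Rightarrow> 'w \<Rightarrow> bool" where
  "relab f L EL = (\<lambda>c d. \<exists>x\<in>L. \<exists>y\<in>L. c = f x \<and> d = f y \<and> EL x y)"

lemma relabel_iso:
  fixes L :: "'v set" and f :: "'v \<Rightarrow> 'w"
  assumes inj: "inj_on f L" and EL: "\<And>a c. EL a c \<Longrightarrow> a \<in> L \<and> c \<in> L"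
  shows "raag L EL \<cong> raag (f ` L) (relab f L EL)"
proof -
  define g where "g = inv_into L f"
  define F where "F w = raag_class (f ` L) (relab f L EL) (wmap f (\<lambda>_. True) w)" for w
  have ov: "set (map fst (wmap f (\<lambda>_. True) x)) \<subseteq> f ` L" if "set (map fst x) \<subseteq> L" for x
    using that unfolding wmap_fst by (intro image_mono) auto
  show ?thesis
  proof (rule raag_iso_from_words[where F = F])
    fix x y :: "('v \<times> bool) list"
    assume xy: "set (map fst x) \<subseteq> L" "set (map fst y) \<subseteq> L" "raag_eq L EL x y"
    have "raag_eq (f ` L) (relab f L EL) (wmap f (\<lambda>_. True) x) (wmap f (\<lambda>_. True) y)"
      by (rule raag_eq_wmap[OF xy(3)]) (use EL in \<open>auto simp: relab_def\<close>)
    then show "F x = F y" unfolding F_def by (rule raag_class_eq)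
  next
    fix x :: "('v \<times> bool) list" assume x: "set (map fst x) \<subseteq> L"
    show "F x \<in> carrier (raag (f ` L) (relab f L EL))"
      using ov[OF x] unfolding F_def raag_def by (auto intro!: imageI)
  next
    fix x y :: "('v \<times> bool) list" assume x: "set (map fst x) \<subseteq> L" and y: "set (map fst y) \<subseteq> L"
    show "F (x @ y) = F x \<otimes>\<^bsub>raag (f ` L) (relab f L EL)\<^esub> F y"
      unfolding F_def using raag_mult[OF ov[OF x] ov[OF y]] by simp
  next
    fix h assume "h \<in> carrier (raag (f ` L) (relab f L EL))"
    then obtain q :: "('w \<times> bool) list" where h: "h = raag_class (f ` L) (relab f L EL) q"
      and q: "set (map fst q) \<subseteq> f ` L" unfolding raag_def by auto
    have 1: "set (map fst (wmap g (\<lambda>_. True) q)) \<subseteq> L"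
      unfolding wmap_fst g_def by (rule image_subsetI, rule inv_into_into) (use q in blast)
    have "wmap f (\<lambda>_. True) (wmap g (\<lambda>_. True) q) = wmap id (\<lambda>_. True) q"
      by (simp add: wmap_wmap, rule wmap_cong) (use q in \<open>auto simp: g_def f_inv_into_f\<close>)
    then have "F (wmap g (\<lambda>_. True) q) = h" unfolding F_def h by (simp add: wmap_id)
    then show "\<exists>x. set (map fst x) \<subseteq> L \<and> F x = h" using 1 by blast
  next
    fix x y :: "('v \<times> bool) list"
    assume x: "set (map fst x) \<subseteq> L" and y: "set (map fst y) \<subseteq> L" and Fxy: "F x = F y"
    have "raag_eq (f ` L) (relab f L EL) (wmap f (\<lambda>_. True) x) (wmap f (\<lambda>_. True) y)"
      using Fxy unfolding F_def by (intro raag_class_eqD ov[OF y])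
    then have "raag_eq L EL (wmap g (\<lambda>_. True) (wmap f (\<lambda>_. True) x)) (wmap g (\<lambda>_. True) (wmap f (\<lambda>_. True) y))"
      by (rule raag_eq_wmap) (use inj in \<open>auto simp: g_def inv_into_into relab_def\<close>)
    moreover have "wmap g (\<lambda>_. True) (wmap f (\<lambda>_. True) z) = z" if "set (map fst z) \<subseteq> L" for z
    proof -
      have "wmap g (\<lambda>_. True) (wmap f (\<lambda>_. True) z) = wmap id (\<lambda>_. True) z"
        by (simp add: wmap_wmap, rule wmap_cong) (use that inj in \<open>auto simp: g_def\<close>)
      then show ?thesis by (simp add: wmap_id)
    qed
    ultimately show "raag_eq L EL x y" using x y by simp
  qed
qed

lemma iso_DirProd_gen:
  assumes "g \<in> iso G G2" and "h \<in> iso H I"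
  shows "(\<lambda>(x,y). (g x, h y)) \<in> iso (G \<times>\<times> H) (G2 \<times>\<times> I)"
proof-
  have "(\<lambda>(x,y). (g x, h y)) \<in> hom (G \<times>\<times> H) (G2 \<times>\<times> I)"
    using assms unfolding iso_def hom_def by auto
  moreover have " inj_on (\<lambda>(x,y). (g x, h y)) (carrier (G \<times>\<times> H))"
    using assms unfolding iso_def DirProd_def bij_betw_def inj_on_def by auto
  moreover have "(\<lambda>(x, y). (g x, h y)) ` carrier (G \<times>\<times> H) = carrier (G2 \<times>\<times> I)"
    using assms unfolding iso_def bij_betw_def image_def DirProd_def by fastforce
  ultimately show "(\<lambda>(x,y). (g x, h y)) \<in> iso (G \<times>\<times> H) (G2 \<times>\<times> I)"
    unfolding iso_def bij_betw_def by auto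
qed

lemma is_iso_DirProd_gen: "G \<cong> G2 \<Longrightarrow> H \<cong> I \<Longrightarrow> G \<times>\<times> H \<cong> G2 \<times>\<times> I"
  unfolding is_iso_def using iso_DirProd_gen by blast

lemma prod_zero_iso:
  fixes R :: "('a,'b) monoid_scheme" and G :: "('c,'d) monoid_scheme"
  shows "R \<cong> product_group {..<(0::nat)} (\<lambda>_. G) \<times>\<times> R"
proof -
  define h :: "'a \<Rightarrow> (nat \<Rightarrow> 'c) \<times> 'a" where "h r = ((\<lambda>_::nat. undefined), r)" for r
  have "h \<in> iso R (product_group {..<(0::nat)} (\<lambda>_. G) \<times>\<times> R)"
    unfolding iso_def hom_def bij_betw_def inj_on_def h_def
    by (auto simp: restrict_def)
  then show ?thesis unfolding is_iso_def by blast
qed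

lemma ext_mem:
  fixes G :: "('c,'d) monoid_scheme"
  assumes x: "x \<in> carrier G" and p: "p \<in> (\<Pi>\<^sub>E i\<in>{..<m}. carrier G)"
  shows "(\<lambda>i\<in>{..<Suc m}. if i = m then x else p i) \<in> (\<Pi>\<^sub>E i\<in>{..<Suc m}. carrier G)"
proof (rule restrict_PiE_iff[THEN iffD2], intro ballI)
  fix i assume i: "i \<in> {..<Suc m}"
  show "(if i = m then x else p i) \<in> carrier G"
  proof (cases "i = m")
    case True then show ?thesis using x by simp
  next
    case False
    then have "i \<in> {..<m}" using i by auto
    then show ?thesis using PiE_mem[OF p] False by simp
  qed
qed

lemma prod_step_iso:
  fixes R :: "('a,'b) monoid_scheme" and G :: "('c,'d) monoid_scheme"
  shows "G \<times>\<times> (product_group {..<m} (\<lambda>_. G) \<times>\<times> R) \<cong> product_group {..<Suc m} (\<lambda>_. G) \<times>\<times> R"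
proof -
  define h :: "'c \<times> (nat \<Rightarrow> 'c) \<times> 'a \<Rightarrow> (nat \<Rightarrow> 'c) \<times> 'a" where
    "h = (\<lambda>(x, (p, r)). ((\<lambda>i\<in>{..<Suc m}. if i = m then x else p i), r))"
  have mem: "h a \<in> carrier (product_group {..<Suc m} (\<lambda>_. G) \<times>\<times> R)"
    if "a \<in> carrier (G \<times>\<times> (product_group {..<m} (\<lambda>_. G) \<times>\<times> R))" for a
  proof -
    obtain x p r where a: "a = (x,p,r)" by (cases a) auto
    have x: "x \<in> carrier G" and p: "p \<in> (\<Pi>\<^sub>E i\<in>{..<m}. carrier G)" and r: "r \<in> carrier R"
      using that unfolding a by simp_all
    show ?thesis unfolding a h_def using ext_mem[OF x p] r by simp
  qed
  have mul: "h (a \<otimes>\<^bsub>G \<times>\<times> (product_group {..<m} (\<lambda>_. G) \<times>\<times> R)\<^esub> a') =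
      h a \<otimes>\<^bsub>product_group {..<Suc m} (\<lambda>_. G) \<times>\<times> R\<^esub> h a'" for a a'
  proof -
    obtain x p r where a: "a = (x,p,r)" by (cases a) auto
    obtain x' p' r' where a': "a' = (x',p',r')" by (cases a') auto
    have "(\<lambda>i\<in>{..<Suc m}. if i = m then x \<otimes>\<^bsub>G\<^esub> x' else (\<lambda>i\<in>{..<m}. p i \<otimes>\<^bsub>G\<^esub> p' i) i)
        = (\<lambda>i\<in>{..<Suc m}. (\<lambda>i\<in>{..<Suc m}. if i = m then x else p i) i \<otimes>\<^bsub>G\<^esub> (\<lambda>i\<in>{..<Suc m}. if i = m then x' else p' i) i)"
    proof (rule restrict_ext)
      fix i assume i: "i \<in> {..<Suc m}"
      show "(if i = m then x \<otimes>\<^bsub>G\<^esub> x' else (\<lambda>i\<in>{..<m}. p i \<otimes>\<^bsub>G\<^esub> p' i) i) =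
        (\<lambda>i\<in>{..<Suc m}. if i = m then x else p i) i \<otimes>\<^bsub>G\<^esub> (\<lambda>i\<in>{..<Suc m}. if i = m then x' else p' i) i"
      proof (cases "i = m")
        case True then show ?thesis using i by simp
      next
        case False
        then have "i \<in> {..<m}" using i by auto
        then show ?thesis using i False by simp
      qed
    qed
    then show ?thesis unfolding a a' h_def by simp
  qed
  have hom: "h \<in> hom (G \<times>\<times> (product_group {..<m} (\<lambda>_. G) \<times>\<times> R)) (product_group {..<Suc m} (\<lambda>_. G) \<times>\<times> R)"
    unfolding hom_def using mem mul by blast
  have inj: "inj_on h (carrier (G \<times>\<times> (product_group {..<m} (\<lambda>_. G) \<times>\<times> R)))"
  proof (rule inj_onI)
    fix a b assume ab: "a \<in> carrier (G \<times>\<times> (product_group {..<m} (\<lambda>_. G) \<times>\<times> R))"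
      "b \<in> carrier (G \<times>\<times> (product_group {..<m} (\<lambda>_. G) \<times>\<times> R))" "h a = h b"
    obtain x p r where a: "a = (x,p,r)" by (cases a) auto
    obtain x' p' r' where b: "b = (x',p',r')" by (cases b) auto
    have p: "p \<in> (\<Pi>\<^sub>E i\<in>{..<m}. carrier G)" using ab(1) unfolding a by simp
    have p': "p' \<in> (\<Pi>\<^sub>E i\<in>{..<m}. carrier G)" using ab(2) unfolding b by simp
    have e: "(\<lambda>i\<in>{..<Suc m}. if i = m then x else p i) = (\<lambda>i\<in>{..<Suc m}. if i = m then x' else p' i)" "r = r'"
      using ab(3) unfolding a b h_def by simp_all
    have "x = x'" using fun_cong[OF e(1), of m] by simp
    moreover have "p i = p' i" for i
    proof (cases "i < m")
      case True then show ?thesis using fun_cong[OF e(1), of i] by simp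
    next
      case False
      then have "i \<notin> {..<m}" by simp
      then show ?thesis using PiE_arb[OF p] PiE_arb[OF p'] by simp
    qed
    ultimately show "a = b" using a b e(2) by auto
  qed
  have surj: "carrier (product_group {..<Suc m} (\<lambda>_. G) \<times>\<times> R) \<subseteq> h ` carrier (G \<times>\<times> (product_group {..<m} (\<lambda>_. G) \<times>\<times> R))"
  proof
    fix y assume y: "y \<in> carrier (product_group {..<Suc m} (\<lambda>_. G) \<times>\<times> R)"
    obtain q r where yq: "y = (q, r)" by (cases y)
    have q: "q \<in> (\<Pi>\<^sub>E i\<in>{..<Suc m}. carrier G)" and r: "r \<in> carrier R" using y unfolding yq by simp_all
    have "(\<lambda>i\<in>{..<Suc m}. if i = m then q m else restrict q {..<m} i) = q"
    proof
      fix i show "(\<lambda>i\<in>{..<Suc m}. if i = m then q m else restrict q {..<m} i) i = q i"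
      proof (cases "i < Suc m")
        case True then show ?thesis by simp
      next
        case False
        then have "i \<notin> {..<Suc m}" by simp
        then show ?thesis using PiE_arb[OF q] by simp
      qed
    qed
    then have "h (q m, restrict q {..<m}, r) = y" unfolding h_def yq by simp
    moreover have "q m \<in> carrier G" using PiE_mem[OF q, of m] by simp
    moreover have "restrict q {..<m} \<in> (\<Pi>\<^sub>E i\<in>{..<m}. carrier G)"
    proof (rule restrict_PiE_iff[THEN iffD2], intro ballI)
      fix i assume "i \<in> {..<m}"
      then have "i \<in> {..<Suc m}" by simp
      then show "q i \<in> carrier G" by (rule PiE_mem[OF q])
    qed
    ultimately have hy: "h (q m, restrict q {..<m}, r) = y"
      and m2: "(q m, restrict q {..<m}, r) \<in> carrier (G \<times>\<times> (product_group {..<m} (\<lambda>_. G) \<times>\<times> R))"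
      using r unfolding carrier_DirProd carrier_product_group by (blast intro: SigmaI)+
    show "y \<in> h ` carrier (G \<times>\<times> (product_group {..<m} (\<lambda>_. G) \<times>\<times> R))"
      by (rule image_eqI[where f = h, OF hy[symmetric] m2])
  qed
  have "h ` carrier (G \<times>\<times> (product_group {..<m} (\<lambda>_. G) \<times>\<times> R)) = carrier (product_group {..<Suc m} (\<lambda>_. G) \<times>\<times> R)"
    using surj mem by blast
  then show ?thesis unfolding is_iso_def iso_def bij_betw_def using hom inj by blast
qed

lemma sg_sym: "simple_graph V E \<Longrightarrow> E x y \<Longrightarrow> E y x"
  unfolding simple_graph_def by blast
lemma sg_irr: "simple_graph V E \<Longrightarrow> \<not> E x x"
  unfolding simple_graph_def by blast
lemma sg_in: "simple_graph V E \<Longrightarrow> E x y \<Longrightarrow> x \<in> V \<and> y \<in> V"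
  unfolding simple_graph_def by blast

lemma nafree_finite: "simple_graph V E \<Longrightarrow> finite (nafree_classes V E)"
  by (rule finite_subset[of _ "Pow V"]) (auto simp: nafree_classes_def equiv_class_def simple_graph_def)

lemma comp_avoid:
  assumes "w \<in> component E S z" "w \<noteq> z" "\<And>y. E y w \<Longrightarrow> y \<notin> S"
  shows False
proof -
  have "(\<lambda>a b. E a b \<and> a \<in> S \<and> b \<in> S)\<^sup>*\<^sup>* z w" using assms(1) unfolding component_def by simp
  then show False using assms(2,3) by (cases rule: rtranclp.cases) auto
qed

lemma decompose:
  assumes sg: "simple_graph V E" and nsil: "no_SIL V E" and C: "C \<in> nafree_classes V E"
  shows "\<exists>u b. u \<in> V \<and> b \<in> V \<and> u \<noteq> b \<and> \<not> E u b \<and> (\<forall>x\<in>V-{u,b}. E u x \<and> E b x) \<and> C = {u,b}"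
proof -
  obtain u where u: "u \<in> V" "C = equiv_class V E u" "2 \<le> card C" "\<forall>a\<in>C. \<forall>b\<in>C. \<not> E a b"
    using C unfolding nafree_classes_def by blast
  have "vle V E u u" unfolding vle_def st_def by blast
  then have "vequiv V E u u" unfolding vequiv_def by blast
  then have uC: "u \<in> C" unfolding u(2) equiv_class_def using u(1) by blast
  have "\<exists>b\<in>C. b \<noteq> u"
  proof (rule ccontr)
    assume "\<not> (\<exists>b\<in>C. b \<noteq> u)"
    then have "\<forall>b\<in>C. b = u" by blast
    then have "C = {u}" using uC by blast
    then show False using u(3) by simp
  qed
  then obtain b where bC: "b \<in> C" "b \<noteq> u" by blast
  have bV: "b \<in> V" and vq: "vequiv V E u b" using bC u(2) unfolding equiv_class_def by auto
  have nub: "\<not> E u b" using u(4) uC bC by blast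
  have nbu: "\<not> E b u" using nub sg_sym[OF sg] by blast
  have lkeq: "lk V E u = lk V E b"
    using vq nub nbu unfolding vequiv_def vle_def st_def lk_def by auto
  have adj: "E u x" if x: "x \<in> V" "x \<noteq> u" "x \<noteq> b" for x
  proof (rule ccontr)
    assume nux: "\<not> E u x"
    have nbx: "\<not> E b x" using nux lkeq x(1) unfolding lk_def by blast
    let ?S = "V - (lk V E u \<inter> lk V E b)"
    have notS: "y \<notin> ?S" if "E y u \<or> E y b" for y
      using that sg_in[OF sg] sg_sym[OF sg] lkeq unfolding lk_def by blast
    have "u \<notin> component E ?S x" using comp_avoid[of u E ?S x] notS x(2) by metis
    moreover have "b \<notin> component E ?S x" using comp_avoid[of b E ?S x] notS x(3) by metis
    ultimately have "is_SIL V E u b x"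
      unfolding is_SIL_def Let_def using u(1) bV x nub nux nbx bC(2) by auto
    then show False using nsil unfolding no_SIL_def by blast
  qed
  have adjb: "E b x" if "x \<in> V" "x \<noteq> u" "x \<noteq> b" for x
    using adj[OF that] lkeq that(1) unfolding lk_def by blast
  have "C \<subseteq> {u,b}"
  proof
    fix c assume c: "c \<in> C"
    then have "c \<in> V" using u(2) unfolding equiv_class_def by auto
    moreover have "\<not> E u c" using u(4) uC c by blast
    ultimately show "c \<in> {u,b}" using adj by blast
  qed
  then have "C = {u,b}" using uC bC by auto
  then show ?thesis using u(1) bV bC(2) nub adj adjb by blast
qed

context
  fixes V :: "'v set" and E :: "'v \<Rightarrow> 'v \<Rightarrow> bool" and u b :: 'v and L :: "'v set"
  assumes sg: "simple_graph V E" and uV: "u \<in> V" "b \<in> V" "u \<noteq> b" "\<not> E u b"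
    and Ldef: "L = V - {u,b}" and adj: "\<And>x. x \<in> L \<Longrightarrow> E u x \<and> E b x"
begin

lemma lk_u: "lk V E u = L"
  using adj sg_in[OF sg] sg_irr[OF sg] uV unfolding lk_def Ldef by auto

lemma lk_b: "lk V E b = L"
  using adj sg_in[OF sg] sg_irr[OF sg] sg_sym[OF sg] uV unfolding lk_def Ldef by auto

lemma lkL_sub: "lk L (restr E L) v \<subseteq> L"
  by (auto simp: lk_def)

lemma lk_v: "v \<in> L \<Longrightarrow> lk V E v = {u,b} \<union> lk L (restr E L) v"
  using adj sg_in[OF sg] sg_sym[OF sg] uV unfolding lk_def restr_def Ldef by auto

lemma vle_LL: "v \<in> L \<Longrightarrow> w \<in> L \<Longrightarrow> vle V E v w \<longleftrightarrow> vle L (restr E L) v w"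
  unfolding vle_def st_def using lk_v[of v] lk_v[of w] lkL_sub[of v] lkL_sub[of w] Ldef by auto

lemma not_vle_Lab: "v \<in> L \<Longrightarrow> w = u \<or> w = b \<Longrightarrow> \<not> vle V E v w"
  unfolding vle_def st_def using lk_v[of v] lk_u lk_b Ldef uV(3) by auto

lemma eqc_v: "v \<in> L \<Longrightarrow> equiv_class V E v = equiv_class L (restr E L) v"
  unfolding equiv_class_def vequiv_def using vle_LL not_vle_Lab Ldef by auto

lemma eqc_ab: "x = u \<or> x = b \<Longrightarrow> equiv_class V E x = {u,b}"
  unfolding equiv_class_def vequiv_def using not_vle_Lab uV Ldef
  by (auto simp: vle_def st_def lk_u lk_b)

lemma eqcL_sub: "equiv_class L (restr E L) v \<subseteq> L"
  by (auto simp: equiv_class_def)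

lemma nafree_join:
  assumes "{u,b} \<in> nafree_classes V E"
  shows "nafree_classes V E = insert {u,b} (nafree_classes L (restr E L))"
proof
  show "nafree_classes V E \<subseteq> insert {u,b} (nafree_classes L (restr E L))"
  proof
    fix C assume "C \<in> nafree_classes V E"
    then obtain v where v: "v \<in> V" "C = equiv_class V E v" "2 \<le> card C" "\<forall>a\<in>C. \<forall>c\<in>C. \<not> E a c"
      unfolding nafree_classes_def by blast
    show "C \<in> insert {u,b} (nafree_classes L (restr E L))"
    proof (cases "v = u \<or> v = b")
      case True then show ?thesis using eqc_ab v(2) by simp
    next
      case False
      then have vL: "v \<in> L" using v(1) Ldef by auto
      then have "C = equiv_class L (restr E L) v" using eqc_v v(2) by simp
      then have "C \<in> nafree_classes L (restr E L)"
        unfolding nafree_classes_def using vL v(3,4) by (auto simp: restr_def)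
      then show ?thesis by simp
    qed
  qed
  show "insert {u,b} (nafree_classes L (restr E L)) \<subseteq> nafree_classes V E"
  proof
    fix C assume "C \<in> insert {u,b} (nafree_classes L (restr E L))"
    then consider "C = {u,b}" | "C \<in> nafree_classes L (restr E L)" by blast
    then show "C \<in> nafree_classes V E"
    proof cases
      case 1 then show ?thesis using assms by simp
    next
      case 2
      then obtain v where v: "v \<in> L" "C = equiv_class L (restr E L) v" "2 \<le> card C"
        "\<forall>a\<in>C. \<forall>c\<in>C. \<not> restr E L a c"
        unfolding nafree_classes_def by blast
      have "C = equiv_class V E v" using eqc_v v(1,2) by simp
      moreover have "\<forall>a\<in>C. \<forall>c\<in>C. \<not> E a c"
      proof (intro ballI)
        fix a c assume ac: "a \<in> C" "c \<in> C"
        then have "a \<in> L" "c \<in> L" using eqcL_sub v(2) by blast+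
        then show "\<not> E a c" using v(4) ac unfolding restr_def by blast
      qed
      moreover have "v \<in> V" using v(1) Ldef by auto
      ultimately show ?thesis unfolding nafree_classes_def using v(3) by blast
    qed
  qed
qed

lemma ab_notin: "{u,b} \<notin> nafree_classes L (restr E L)"
  using eqcL_sub Ldef unfolding nafree_classes_def by blast

lemma sg_L: "simple_graph L (restr E L)"
  using sg unfolding simple_graph_def restr_def Ldef by auto

lemma nosil_L:
  assumes "no_SIL V E"
  shows "no_SIL L (restr E L)"
  unfolding no_SIL_def
proof (intro allI notI)
  fix x y z assume sil: "is_SIL L (restr E L) x y z"
  define S where "S = L - (lk L (restr E L) x \<inter> lk L (restr E L) y)"
  have xyz: "x \<in> L" "y \<in> L" "z \<in> L" using sil unfolding is_SIL_def by auto
  have SV: "V - (lk V E x \<inter> lk V E y) = S"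
    unfolding S_def using lk_v[OF xyz(1)] lk_v[OF xyz(2)] lkL_sub Ldef by auto
  have "S \<subseteq> L" unfolding S_def by auto
  then have R: "(\<lambda>a c. E a c \<and> a \<in> S \<and> c \<in> S) = (\<lambda>a c. restr E L a c \<and> a \<in> S \<and> c \<in> S)"
    by (auto simp: restr_def fun_eq_iff)
  have comp: "component E S z = component (restr E L) S z"
    unfolding component_def R ..
  have cx: "x \<notin> component (restr E L) S z \<and> y \<notin> component (restr E L) S z"
    using sil unfolding is_SIL_def Let_def S_def by blast
  have dist: "x \<noteq> y \<and> x \<noteq> z \<and> y \<noteq> z" using sil unfolding is_SIL_def by blast
  have nadj: "\<not> E x y \<and> \<not> E x z \<and> \<not> E y z" using sil xyz unfolding is_SIL_def restr_def by blast
  have inV: "x \<in> V \<and> y \<in> V \<and> z \<in> V" using xyz Ldef by blast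
  have "is_SIL V E x y z"
    unfolding is_SIL_def Let_def SV comp using cx dist nadj inV by blast
  then show False using assms unfolding no_SIL_def by blast
qed

end

lemma restr_restr: "L' \<subseteq> L \<Longrightarrow> restr (restr E L) L' = restr E L'"
  by (auto simp: restr_def fun_eq_iff)

lemma restr_self:
  assumes "simple_graph V E" shows "restr E V = E"
proof (intro ext)
  fix c d show "restr E V c d = E c d" using sg_in[OF assms, of c d] unfolding restr_def by blast
qed

lemma main_ind:
  "simple_graph V E \<Longrightarrow> no_SIL V E \<Longrightarrow> card (nafree_classes V E) = n \<Longrightarrow>
   \<exists>L \<subseteq> V. nafree_classes L (restr E L) = {} \<and>
     raag V E \<cong> product_group {..<n} (\<lambda>_. F2) \<times>\<times> raag L (restr E L)"
proof (induction n arbitrary: V E)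
  case 0
  then have "nafree_classes V E = {}" using card_0_eq[OF nafree_finite[OF 0(1)]] by blast
  moreover have "restr E V = E" using restr_self 0 by blast
  ultimately show ?case using prod_zero_iso by (metis order_refl)
next
  case (Suc n)
  then obtain C where C: "C \<in> nafree_classes V E" by (metis card.empty ex_in_conv nat.simps(3))
  obtain u b where ub: "u \<in> V" "b \<in> V" "u \<noteq> b" "\<not> E u b" "\<forall>x\<in>V-{u,b}. E u x \<and> E b x" "C = {u,b}"
    using decompose[OF Suc.prems(1,2) C] by blast
  define L0 where "L0 = V - {u,b}"
  have adj: "\<And>x. x \<in> L0 \<Longrightarrow> E u x \<and> E b x" using ub(5) L0_def by blast
  note facts = Suc.prems(1) ub(1-4) L0_def adj
  have nf: "nafree_classes V E = insert {u,b} (nafree_classes L0 (restr E L0))"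
    using nafree_join[OF facts] C ub(6) by simp
  have sgL: "simple_graph L0 (restr E L0)" by (rule sg_L[OF facts])
  have "card (nafree_classes L0 (restr E L0)) = n"
    using Suc.prems(3) nf ab_notin[OF facts] nafree_finite[OF sgL] by simp
  then obtain L where L: "L \<subseteq> L0" "nafree_classes L (restr (restr E L0) L) = {}"
    "raag L0 (restr E L0) \<cong> product_group {..<n} (\<lambda>_. F2) \<times>\<times> raag L (restr (restr E L0) L)"
    using Suc.IH[OF sgL nosil_L[OF facts Suc.prems(2)]] by blast
  have rr: "restr (restr E L0) L = restr E L" by (rule restr_restr[OF L(1)])
  have "raag V E \<cong> F2 \<times>\<times> raag L0 (restr E L0)"
    by (rule join_iso[OF Suc.prems(1) ub(1-4) L0_def adj])
  also have "\<dots> \<cong> F2 \<times>\<times> (product_group {..<n} (\<lambda>_. F2) \<times>\<times> raag L (restr E L))"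
    by (rule is_iso_DirProd_gen[OF iso_refl]) (use L(3) rr in simp)
  also have "\<dots> \<cong> product_group {..<Suc n} (\<lambda>_. F2) \<times>\<times> raag L (restr E L)"
    by (rule prod_step_iso)
  finally show ?case using L(1,2) rr L0_def by auto
qed

lemma img_subset_iff_inj: "inj_on f C \<Longrightarrow> A \<subseteq> C \<Longrightarrow> B \<subseteq> C \<Longrightarrow> f ` A \<subseteq> f ` B \<longleftrightarrow> A \<subseteq> B"
  unfolding inj_on_def by blast

lemma relab_nafree:
  fixes f :: "'v \<Rightarrow> 'w"
  assumes inj: "inj_on f L" and sg: "simple_graph L EL" and nf: "nafree_classes L EL = {}"
  shows "nafree_classes (f ` L) (relab f L EL) = {}"
proof (rule ccontr)
  let ?D = "relab f L EL"
  have inL: "\<And>a c. EL a c \<Longrightarrow> a \<in> L \<and> c \<in> L" using sg_in[OF sg] by blast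
  have Df: "?D (f a) (f c) \<longleftrightarrow> EL a c" if "a \<in> L" "c \<in> L" for a c
    using that inj inL unfolding relab_def inj_on_def by blast
  have lkf: "lk (f ` L) ?D (f v) = f ` lk L EL v" if "v \<in> L" for v
  proof -
    have "lk (f ` L) ?D (f v) = {w \<in> f ` L. ?D (f v) w}" by (simp add: lk_def)
    also have "\<dots> = f ` {w \<in> L. EL v w}" using Df that by auto
    finally show ?thesis by (simp add: lk_def)
  qed
  have stf: "st (f ` L) ?D (f v) = f ` st L EL v" if "v \<in> L" for v
    using lkf[OF that] by (simp add: st_def)
  have stsub: "st L EL v \<subseteq> L" if "v \<in> L" for v using that by (auto simp: st_def lk_def)
  have vlef: "vle (f ` L) ?D (f v) (f w) \<longleftrightarrow> vle L EL v w" if "v \<in> L" "w \<in> L" for v w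
    unfolding vle_def using lkf[OF that(1)] stf[OF that(2)] img_subset_iff_inj[OF inj] stsub[OF that(2)]
    by (auto simp: lk_def)
  have eqf: "equiv_class (f ` L) ?D (f v) = f ` equiv_class L EL v" if "v \<in> L" for v
    using vlef that unfolding equiv_class_def vequiv_def by auto
  assume "nafree_classes (f ` L) ?D \<noteq> {}"
  then obtain C w where w: "w \<in> f ` L" "C = equiv_class (f ` L) ?D w" "2 \<le> card C"
    "\<forall>a\<in>C. \<forall>c\<in>C. \<not> ?D a c" unfolding nafree_classes_def by blast
  obtain v where v: "v \<in> L" "w = f v" using w(1) by blast
  have sub: "equiv_class L EL v \<subseteq> L" by (auto simp: equiv_class_def)
  have Ceq: "C = f ` equiv_class L EL v" using eqf v w(2) by simp
  have "card C = card (equiv_class L EL v)" unfolding Ceq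
    by (rule card_image, rule inj_on_subset[OF inj sub])
  moreover have "\<forall>a\<in>equiv_class L EL v. \<forall>c\<in>equiv_class L EL v. \<not> EL a c"
    using w(4) Df sub unfolding Ceq by blast
  ultimately have "equiv_class L EL v \<in> nafree_classes L EL"
    unfolding nafree_classes_def using v(1) w(3) by auto
  then show False using nf by simp
qed

lemma relab_sg:
  assumes inj: "inj_on f L" and sg: "simple_graph L EL"
  shows "simple_graph (f ` L) (relab f L EL)"
  using assms unfolding simple_graph_def relab_def inj_on_def by blast

theorem lemma4p2:
  fixes V :: "'v set" and E :: "'v \<Rightarrow> 'v \<Rightarrow> bool"
  assumes "simple_graph V E"
    and "no_SIL V E"
    and "k = card (nafree_classes V E)"
  shows "\<exists>(W :: nat set) (D :: nat \<Rightarrow> nat \<Rightarrow> bool).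
           simple_graph W D \<and> nafree_classes W D = {} \<and>
           raag V E \<cong> (product_group {..<k} (\<lambda>_. F2) \<times>\<times> raag W D)"
proof -
  obtain L where L: "L \<subseteq> V" "nafree_classes L (restr E L) = {}"
    "raag V E \<cong> product_group {..<k} (\<lambda>_. F2) \<times>\<times> raag L (restr E L)"
    using main_ind[OF assms(1,2) assms(3)[symmetric]] by blast
  have sgL: "simple_graph L (restr E L)"
    using assms(1) L(1) unfolding simple_graph_def restr_def by (auto intro: finite_subset)
  then have "finite L" unfolding simple_graph_def by blast
  then obtain f :: "'v \<Rightarrow> nat" where inj: "inj_on f L"
    using finite_imp_inj_to_nat_seg by blast
  have inL: "\<And>a c. restr E L a c \<Longrightarrow> a \<in> L \<and> c \<in> L" by (simp add: restr_def)
  have "raag V E \<cong> product_group {..<k} (\<lambda>_. F2) \<times>\<times> raag (f ` L) (relab f L (restr E L))"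
    using L(3) is_iso_DirProd_gen[OF iso_refl relabel_iso[OF inj inL]] by (rule iso_trans)
  then show ?thesis using relab_sg[OF inj sgL] relab_nafree[OF inj sgL L(2)] by blast
qed

end
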